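(* Let a countable group $G$ act on a set $X$, let $\Phi=(\ell,\phi,\mathcal{Z},\Gamma,\mathcal{H})$ be a chart for $G$, let $0<\epsilon<\tfrac12$, let $A\subseteq\mathbb{Z}^\ell\times\Gamma$ be a rectangle, let $R\subseteq X$ be $(\Phi,\epsilon)$-roughly $A$ at $x\in X^{\mathcal{H}}$, and let $M$ be a positive integer with $(M+2)\cdot A+4\cdot\mathcal{Z}\subseteq\mathrm{dom}(\phi)$. Let $y\in X^{\mathcal{H}}$. (i) If $y=\phi(u)\cdot x$ with $u\in M\cdot A$, then $R$ is $(\Phi,2\epsilon)$-roughly $A-u$ at $y$. (ii) If $x=\phi(v)\cdot y$ with $-v\in M\cdot A$, then $R$ is $(\Phi,2\epsilon)$-roughly $A+v$ at $y$.
   Context: Rectangles: Let $\Gamma$ be a finite additive abelian group with identity $0_\Gamma$ and $\ell\in\mathbb{N}$. Elements $v$ of $\mathbb{R}^\ell\times\Gamma$ have coordinates $v_1,\dots,v_\ell\in\mathbb{R}$, $v_{\ell+1}\in\Gamma$; $\mathbf{0}$ has first $\ell$ coordinates $0$ and last coordinate $0_\Gamma$. For $\lambda\in\mathbb{R}$, $\lambda\cdot v=(\lambda v_1,\dots,\lambda v_\ell,v_{\ell+1})$. For $a\in\mathbb{R}^\ell\times\Gamma$ let $\mathrm{Rec}(a)=\{b\in\mathbb{Z}^\ell\times\Gamma: -|a_i|\le b_i\le|a_i|,\ 1\le i\le\ell\}$. A rectangle is a set $c+\mathrm{Rec}(a)$ with $c,a\in\mathbb{Z}^\ell\times\Gamma$;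 it can be written uniquely with $c\in\mathbb{Z}^\ell\times\{0_\Gamma\}$ (center) and $a\in\mathbb{N}^\ell\times\{0_\Gamma\}$ (radius vector $\mathrm{L}(A)$, entries $\mathrm{L}_i(A)$). Centered means center $\mathbf{0}$. $A\sqsubseteq B$ means $\mathrm{L}_i(A)\le\mathrm{L}_i(B)$ for all $i$. For $\lambda>0$, $\lambda\cdot A=c+\mathrm{Rec}(\lambda\cdot\mathrm{L}(A))$ with $c$ the center of $A$. Sums of sets/vectors are elementwise. Charts: a chart for $G$ is $\Phi=(\ell,\phi,\mathcal{Z},\Gamma,\mathcal{H})$ with $\mathcal{H}$ a finite collection of pairwise conjugate subgroups of $G$, $\Gamma$ finite abelian, $\mathcal{Z}$ a centered rectangle with all $\mathrm{L}_i(\mathcal{Z})>0$, $\phi$ an injective map into $G$ with $\mathrm{dom}(\phi)$ a centered rectangle containing $3\cdot\mathcal{Z}$, $\phi(\mathbf{0})=1_G$, and for all $r,s\in\mathrm{dom}(\phi)$, $H\in\mathcal{H}$: $\phi(r)H=\phi(s)H\Rightarrow r=s$; $r+s+\mathcal{Z}\subseteq\mathrm{dom}(\phi)\Rightarrow\exists z\in\mathcal{Z}:\phi(r)\phi(s)H=\phi(r+s+z)H$; $r-s+\mathcal{Z}\subseteq\mathrm{dom}(\phi)\Rightarrow\exists z\in\mathcal{Z}:\phi(r)\phi(s)^{-1}H=\phi(r-s+z)H$; $-r+s+\mathcal{Z}\subseteq\mathrm{dom}(\phi)\Rightarrow\exists z\in\mathcal{Z}:\phi(r)^{-1}\phi(s)H=\phi(-r+s+z)H$;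 $-s+\mathcal{Z}\subseteq\mathrm{dom}(\phi)\Rightarrow\exists z\in\mathcal{Z}:\phi(s)^{-1}H=\phi(-s+z)H$. For $S\subseteq\mathrm{dom}(\phi)$, $\phi(S)\cdot x=\{\phi(s)\cdot x:s\in S\}$. $X^{\mathcal{H}}=\{x\in X:\mathrm{Stab}(x)\in\mathcal{H}\}$. Rough rectangles: for a rectangle $A$ with $2\cdot A\subseteq\mathrm{dom}(\phi)$, $x\in X^{\mathcal{H}}$ and $0<\epsilon<1$, a set $R\subseteq X$ is $(\Phi,\epsilon)$-roughly $A$ at $x$ if $2\cdot\mathcal{Z}\sqsubseteq\epsilon\cdot A$ and $\phi((1-\epsilon)\cdot A)\cdot x\subseteq R\subseteq\phi((1+\epsilon)\cdot A)\cdot x$. *)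

theory Defs
  imports Complex_Main "HOL-Library.Countable_Set" "HOL-Algebra.Group_Action"
begin

text \<open>An element of Z^l x Gamma is a pair (b, g) with b :: nat => int and g in the finite
abelian group Gamma (a type of class finite, ab_group_add); the coordinates b i for i >= l
are required to be 0 (see zspace).\<close>

type_synonym 'c zvec = "(nat \<Rightarrow> int) \<times> 'c"

definition zspace :: "nat \<Rightarrow> ('c::ab_group_add) zvec set" where
  "zspace l = {(b, g). \<forall>i\<ge>l. b i = 0}"

definition vadd :: "('c::ab_group_add) zvec \<Rightarrow> 'c zvec \<Rightarrow> 'c zvec" where
  "vadd v w = (\<lambda>i. fst v i + fst w i, snd v + snd w)"

definition vneg :: "('c::ab_group_add) zvec \<Rightarrow> 'c zvec" where
  "vneg v = (\<lambda>i. - fst v i, - snd v)"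

definition vzero :: "('c::ab_group_add) zvec" where
  "vzero = (\<lambda>i. 0, 0)"

definition translate :: "('c::ab_group_add) zvec set \<Rightarrow> 'c zvec \<Rightarrow> 'c zvec set" where
  "translate A v = (\<lambda>a. vadd a v) ` A"

definition msum :: "('c::ab_group_add) zvec set \<Rightarrow> 'c zvec set \<Rightarrow> 'c zvec set" where
  "msum A B = {vadd a b | a b. a \<in> A \<and> b \<in> B}"

text \<open>c + Rec(a) for a center c in Z^l x {0} (given by its integer part) and a radius
vector a in R^l.\<close>
definition rect :: "nat \<Rightarrow> (nat \<Rightarrow> int) \<Rightarrow> (nat \<Rightarrow> real) \<Rightarrow> ('c::ab_group_add) zvec set" where
  "rect l c a = {(b, g). (\<forall>i<l. \<bar>real_of_int (b i - c i)\<bar> \<le> \<bar>a i\<bar>) \<and> (\<forall>i\<ge>l. b i = 0)}"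

definition rect_cr :: "nat \<Rightarrow> ('c::ab_group_add) zvec set \<Rightarrow> (nat \<Rightarrow> int) \<Rightarrow> (nat \<Rightarrow> nat) \<Rightarrow> bool" where
  "rect_cr l A c L \<longleftrightarrow> (\<forall>i\<ge>l. c i = 0 \<and> L i = 0) \<and> A = rect l c (\<lambda>i. real (L i))"

definition is_rect :: "nat \<Rightarrow> ('c::ab_group_add) zvec set \<Rightarrow> bool" where
  "is_rect l A \<longleftrightarrow> (\<exists>c L. rect_cr l A c L)"

definition centered_rect :: "nat \<Rightarrow> ('c::ab_group_add) zvec set \<Rightarrow> bool" where
  "centered_rect l A \<longleftrightarrow> (\<exists>L. rect_cr l A (\<lambda>i. 0) L)"

definition rscale :: "nat \<Rightarrow> real \<Rightarrow> ('c::ab_group_add) zvec set \<Rightarrow> 'c zvec set" where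
  "rscale l t A = (THE B. \<exists>c L. rect_cr l A c L \<and> B = rect l c (\<lambda>i. t * real (L i)))"

definition rsub :: "nat \<Rightarrow> ('c::ab_group_add) zvec set \<Rightarrow> 'c zvec set \<Rightarrow> bool" where
  "rsub l A B \<longleftrightarrow> (\<exists>cA LA cB LB. rect_cr l A cA LA \<and> rect_cr l B cB LB \<and> (\<forall>i<l. LA i \<le> LB i))"

definition act_img :: "('g \<Rightarrow> 'x \<Rightarrow> 'x) \<Rightarrow> ('c zvec \<Rightarrow> 'g) \<Rightarrow> 'c zvec set \<Rightarrow> 'x \<Rightarrow> 'x set" where
  "act_img act phi S x = {act (phi s) x | s. s \<in> S}"

text \<open>Chart (l, phi, Z, Gamma, H) for G, with dom(phi) = D; Gamma is the type 'c.\<close>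
definition chart ::
  "('g, 'm) monoid_scheme \<Rightarrow> nat \<Rightarrow> (('c::{finite,ab_group_add}) zvec \<Rightarrow> 'g) \<Rightarrow> 'c zvec set
     \<Rightarrow> 'c zvec set \<Rightarrow> 'g set set \<Rightarrow> bool" where
  "chart G l phi D Z \<H> \<longleftrightarrow>
     finite \<H> \<and> (\<forall>H\<in>\<H>. subgroup H G) \<and>
     (\<forall>H1\<in>\<H>. \<forall>H2\<in>\<H>. \<exists>g\<in>carrier G. H2 = {g \<otimes>\<^bsub>G\<^esub> h \<otimes>\<^bsub>G\<^esub> inv\<^bsub>G\<^esub> g | h. h \<in> H1}) \<and>
     (\<exists>LZ. rect_cr l Z (\<lambda>i. 0) LZ \<and> (\<forall>i<l. 0 < LZ i)) \<and>
     centered_rect l D \<and> rscale l 3 Z \<subseteq> D \<and>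
     inj_on phi D \<and> phi ` D \<subseteq> carrier G \<and> phi vzero = \<one>\<^bsub>G\<^esub> \<and>
     (\<forall>r\<in>D. \<forall>s\<in>D. \<forall>H\<in>\<H>.
        (phi r <#\<^bsub>G\<^esub> H = phi s <#\<^bsub>G\<^esub> H \<longrightarrow> r = s) \<and>
        (translate Z (vadd r s) \<subseteq> D \<longrightarrow>
           (\<exists>z\<in>Z. (phi r \<otimes>\<^bsub>G\<^esub> phi s) <#\<^bsub>G\<^esub> H = phi (vadd (vadd r s) z) <#\<^bsub>G\<^esub> H)) \<and>
        (translate Z (vadd r (vneg s)) \<subseteq> D \<longrightarrow>
           (\<exists>z\<in>Z. (phi r \<otimes>\<^bsub>G\<^esub> inv\<^bsub>G\<^esub> phi s) <#\<^bsub>G\<^esub> H = phi (vadd (vadd r (vneg s)) z) <#\<^bsub>G\<^esub> H)) \<and>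
        (translate Z (vadd (vneg r) s) \<subseteq> D \<longrightarrow>
           (\<exists>z\<in>Z. (inv\<^bsub>G\<^esub> phi r \<otimes>\<^bsub>G\<^esub> phi s) <#\<^bsub>G\<^esub> H = phi (vadd (vadd (vneg r) s) z) <#\<^bsub>G\<^esub> H)) \<and>
        (translate Z (vneg s) \<subseteq> D \<longrightarrow>
           (\<exists>z\<in>Z. (inv\<^bsub>G\<^esub> phi s) <#\<^bsub>G\<^esub> H = phi (vadd (vneg s) z) <#\<^bsub>G\<^esub> H)))"

definition XH :: "('g, 'm) monoid_scheme \<Rightarrow> ('g \<Rightarrow> 'x \<Rightarrow> 'x) \<Rightarrow> 'x set \<Rightarrow> 'g set set \<Rightarrow> 'x set" where
  "XH G act X \<H> = {x \<in> X. stabilizer G act x \<in> \<H>}"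

definition roughly ::
  "('g, 'm) monoid_scheme \<Rightarrow> ('g \<Rightarrow> 'x \<Rightarrow> 'x) \<Rightarrow> 'x set \<Rightarrow> nat \<Rightarrow> (('c::{finite,ab_group_add}) zvec \<Rightarrow> 'g)
     \<Rightarrow> 'c zvec set \<Rightarrow> 'c zvec set \<Rightarrow> 'g set set \<Rightarrow> real \<Rightarrow> 'c zvec set \<Rightarrow> 'x \<Rightarrow> 'x set \<Rightarrow> bool" where
  "roughly G act X l phi D Z \<H> eps A x R \<longleftrightarrow>
     is_rect l A \<and> rscale l 2 A \<subseteq> D \<and> x \<in> XH G act X \<H> \<and> 0 < eps \<and> eps < 1 \<and>
     rsub l (rscale l 2 Z) (rscale l eps A) \<and>
     act_img act phi (rscale l (1 - eps) A) x \<subseteq> R \<and> R \<subseteq> act_img act phi (rscale l (1 + eps) A) x"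

end

theory Submission
  imports Defs
begin


lemma rect_mem: "w \<in> rect l c r \<longleftrightarrow> (\<forall>i<l. \<bar>real_of_int (fst w i - c i)\<bar> \<le> \<bar>r i\<bar>) \<and> (\<forall>i\<ge>l. fst w i = 0)"
  by (cases w) (simp add: rect_def)

lemma vadd_fst[simp]: "fst (vadd v w) i = fst v i + fst w i" by (simp add: vadd_def)
lemma vneg_fst[simp]: "fst (vneg v) i = - fst v i" by (simp add: vneg_def)

lemma rect_sub_bound:
  assumes "rect l c1 r1 \<subseteq> rect l c2 r2" "i < l" "\<forall>j\<ge>l. c1 j = (0::int)"
  shows "\<bar>real_of_int (c1 i - c2 i)\<bar> + real_of_int \<lfloor>\<bar>r1 i\<bar>\<rfloor> \<le> \<bar>r2 i\<bar>"
proof -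
  define s :: int where "s = (if c1 i \<ge> c2 i then 1 else -1)"
  define b where "b = ((c1(i := c1 i + s * \<lfloor>\<bar>r1 i\<bar>\<rfloor>)), (0::'a::ab_group_add))"
  have "b \<in> rect l c1 r1"
    unfolding rect_mem b_def using assms(2,3) by (auto simp: s_def)
  then have "b \<in> rect l c2 r2" using assms(1) by blast
  then have F1: "\<bar>real_of_int (c1 i + s * \<lfloor>\<bar>r1 i\<bar>\<rfloor> - c2 i)\<bar> \<le> \<bar>r2 i\<bar>"
    unfolding rect_mem b_def using assms(2) by auto
  have F2: "\<lfloor>\<bar>r1 i\<bar>\<rfloor> \<ge> 0" by simp
  show ?thesis
  proof (cases "c1 i \<ge> c2 i")
    case True
    then have "s = 1" by (simp add: s_def)
    with F1 F2 True show ?thesis by simp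
  next
    case False
    then have "s = -1" by (simp add: s_def)
    with F1 F2 False show ?thesis by simp
  qed
qed

lemma rect_cr_unique:
  assumes "rect_cr l A c L" "rect_cr l A c' L'"
  shows "c' = c \<and> L' = L"
proof -
  have A: "A = rect l c (\<lambda>i. real (L i))" "A = rect l c' (\<lambda>i. real (L' i))"
    "\<forall>i\<ge>l. c i = 0 \<and> L i = 0" "\<forall>i\<ge>l. c' i = 0 \<and> L' i = 0"
    using assms unfolding rect_cr_def by auto
  have "c' i = c i \<and> L' i = L i" for i
  proof (cases "i < l")
    case True
    have 1: "\<bar>real_of_int (c i - c' i)\<bar> + real_of_int \<lfloor>\<bar>real (L i)\<bar>\<rfloor> \<le> \<bar>real (L' i)\<bar>"
      by (rule rect_sub_bound[OF _ True]) (use A in auto)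
    have 2: "\<bar>real_of_int (c' i - c i)\<bar> + real_of_int \<lfloor>\<bar>real (L' i)\<bar>\<rfloor> \<le> \<bar>real (L i)\<bar>"
      by (rule rect_sub_bound[OF _ True]) (use A in auto)
    have "real (L i) = real (L' i)" "real_of_int (c i) = real_of_int (c' i)"
      using 1 2 abs_ge_zero[of "real_of_int (c i - c' i)"] abs_ge_zero[of "real_of_int (c' i - c i)"]
      using abs_minus_commute[of "real_of_int (c i)" "real_of_int (c' i)"] by auto
    then show ?thesis by simp
  next
    case False then show ?thesis using A by auto
  qed
  then show ?thesis by auto
qed

lemma rscale_eq: assumes "rect_cr l A c L" shows "rscale l t A = rect l c (\<lambda>i. t * real (L i))"
  unfolding rscale_def
  by (rule the_equality) (use assms rect_cr_unique[OF assms] in blast)+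

lemma rect_floor: "rect l c r = rect l c (\<lambda>i. real (nat \<lfloor>\<bar>r i\<bar>\<rfloor>))"
proof -
  have K: "(\<bar>real_of_int k\<bar> \<le> \<bar>r i\<bar>) = (\<bar>real_of_int k\<bar> \<le> \<bar>real (nat \<lfloor>\<bar>r i\<bar>\<rfloor>)\<bar>)" for k i
  proof -
    have e: "real (nat \<lfloor>\<bar>r i\<bar>\<rfloor>) = real_of_int \<lfloor>\<bar>r i\<bar>\<rfloor>" by simp
    have "(\<bar>real_of_int k\<bar> \<le> \<bar>r i\<bar>) = (\<bar>k\<bar> \<le> \<lfloor>\<bar>r i\<bar>\<rfloor>)"
      by (simp only: le_floor_iff of_int_abs)
    also have "\<dots> = (real_of_int \<bar>k\<bar> \<le> real_of_int \<lfloor>\<bar>r i\<bar>\<rfloor>)" by (simp only: of_int_le_iff)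
    finally show ?thesis using e by simp
  qed
  then show ?thesis unfolding rect_def by (simp only: K)
qed


lemma translate_rect: fixes v :: "('c::ab_group_add) zvec" assumes "\<forall>j\<ge>l. fst v j = 0"
  shows "translate (rect l c r) v = rect l (\<lambda>i. c i + fst v i) r"
proof
  show "translate (rect l c r) v \<subseteq> rect l (\<lambda>i. c i + fst v i) r"
  proof
    fix w assume "w \<in> translate (rect l c r) v"
    then obtain a where a: "a \<in> rect l c r" "w = vadd a v" unfolding translate_def by blast
    show "w \<in> rect l (\<lambda>i. c i + fst v i) r" unfolding rect_mem a(2) vadd_fst
      using a(1) assms unfolding rect_mem by (simp add: algebra_simps)
  qed
  show "rect l (\<lambda>i. c i + fst v i) r \<subseteq> translate (rect l c r) v"
  proof
    fix b :: "'c zvec" assume b: "b \<in> rect l (\<lambda>i. c i + fst v i) r"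
    have "b = vadd (vadd b (vneg v)) v" by (simp add: vadd_def vneg_def)
    moreover have "vadd b (vneg v) \<in> rect l c r" using b assms unfolding rect_mem vadd_fst vneg_fst
      by (simp add: algebra_simps)
    ultimately show "b \<in> translate (rect l c r) v" unfolding translate_def by blast
  qed
qed

lemma coset_act:
  fixes G (structure)
  assumes "group G" "group_action G X act" "x \<in> X" "g \<in> carrier G" "g' \<in> carrier G"
    "g <#\<^bsub>G\<^esub> stabilizer G act x = g' <#\<^bsub>G\<^esub> stabilizer G act x"
  shows "act g x = act g' x"
proof -
  interpret group G by fact
  interpret ga: group_action G X act by fact
  have "\<one> \<in> stabilizer G act x" by (rule ga.stabilizer_one_closed[OF assms(3)])
  then have "g \<otimes> \<one> \<in> g <# stabilizer G act x"
    unfolding l_coset_def by blast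
  then have "g \<in> g' <# stabilizer G act x" using assms(4,6) by simp
  then obtain h where h: "h \<in> stabilizer G act x" "g = g' \<otimes> h"
    unfolding l_coset_def by blast
  then have "h \<in> carrier G" "act h x = x" unfolding stabilizer_def by auto
  then show ?thesis using h ga.composition_rule[OF assms(3) assms(5)] by simp
qed


lemma rect_memD:
  assumes "w \<in> rect l c r" "i < l" "0 \<le> r i"
  shows "real_of_int (c i) - r i \<le> real_of_int (fst w i) \<and> real_of_int (fst w i) \<le> real_of_int (c i) + r i"
proof -
  have "\<bar>real_of_int (fst w i - c i)\<bar> \<le> \<bar>r i\<bar>" using assms(1,2) unfolding rect_mem by blast
  then show ?thesis using assms(3) by (simp add: abs_le_iff)
qed

lemma rect_memZ: "w \<in> rect l c r \<Longrightarrow> l \<le> i \<Longrightarrow> fst w i = 0"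
  unfolding rect_mem by blast

lemma rect_memI:
  assumes "\<And>i. i < l \<Longrightarrow> real_of_int (c i) - r i \<le> real_of_int (fst w i) \<and> real_of_int (fst w i) \<le> real_of_int (c i) + r i"
    "\<And>i. l \<le> i \<Longrightarrow> fst w i = 0"
  shows "w \<in> rect l c r"
  unfolding rect_mem
proof (intro conjI allI impI)
  fix i assume "i < l"
  from assms(1)[OF this] show "\<bar>real_of_int (fst w i - c i)\<bar> \<le> \<bar>r i\<bar>" by (simp add: abs_le_iff) 
next
  fix i assume "l \<le> i" then show "fst w i = 0" by (rule assms(2))
qed

lemma act_one:
  assumes "group_action G X act" "x \<in> X" shows "act \<one>\<^bsub>G\<^esub> x = x"
proof -
  interpret ga: group_action G X act by fact
  have "(\<lambda>x\<in>X. x) x = act \<one>\<^bsub>G\<^esub> x" by (simp only: ga.id_eq_one)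
  then show ?thesis using assms(2) by simp
qed

lemma act_inv:
  assumes "group G" "group_action G X act" "x \<in> X" "g \<in> carrier G"
  shows "act (inv\<^bsub>G\<^esub> g) (act g x) = x"
proof -
  interpret grp: group G by fact
  interpret ga: group_action G X act by fact
  have "act (inv\<^bsub>G\<^esub> g) (act g x) = act (inv\<^bsub>G\<^esub> g \<otimes>\<^bsub>G\<^esub> g) x"
    using ga.composition_rule[OF assms(3) grp.inv_closed[OF assms(4)] assms(4)] by simp
  also have "\<dots> = x" using assms(4) act_one[OF assms(2,3)] by simp
  finally show ?thesis .
qed



theorem lemma5p2:
  fixes G :: "('g, 'm) monoid_scheme" and act :: "'g \<Rightarrow> 'x \<Rightarrow> 'x" and X :: "'x set"
    and l :: nat and phi :: "('c::{finite,ab_group_add}) zvec \<Rightarrow> 'g"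
    and D Z A :: "'c zvec set" and \<H> :: "'g set set"
    and eps :: real and x y :: 'x and R :: "'x set" and M :: nat
  assumes "group G" and "countable (carrier G)" and "group_action G X act"
    and "chart G l phi D Z \<H>"
    and "0 < eps" and "eps < 1/2"
    and "is_rect l A"
    and "R \<subseteq> X"
    and "x \<in> XH G act X \<H>"
    and "roughly G act X l phi D Z \<H> eps A x R"
    and "0 < M"
    and "msum (rscale l (real M + 2) A) (rscale l 4 Z) \<subseteq> D"
    and "y \<in> XH G act X \<H>"
  shows "(\<forall>u. u \<in> rscale l (real M) A \<and> y = act (phi u) x
            \<longrightarrow> roughly G act X l phi D Z \<H> (2 * eps) (translate A (vneg u)) y R)
       \<and> (\<forall>v. vneg v \<in> rscale l (real M) A \<and> x = act (phi v) y
            \<longrightarrow> roughly G act X l phi D Z \<H> (2 * eps) (translate A v) y R)"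
proof -
  interpret grp: group G by fact
  interpret ga: group_action G X act by fact
  obtain c L where cL: "rect_cr l A c L" using assms(7) unfolding is_rect_def by blast
  have Aeq: "A = rect l c (\<lambda>i. real (L i))" and cLz: "\<forall>i\<ge>l. c i = 0 \<and> L i = 0"
    using cL unfolding rect_cr_def by auto
  note ch = assms(4)[unfolded chart_def]
  have ch4: "\<exists>LZ. rect_cr l Z (\<lambda>i. 0) LZ \<and> (\<forall>i<l. 0 < LZ i)" using ch by (elim conjE)
  have ch5: "centered_rect l D" using ch by (elim conjE)
  have phiDs: "phi ` D \<subseteq> carrier G" using ch by (elim conjE)
  have chall: "\<forall>r\<in>D. \<forall>s\<in>D. \<forall>H\<in>\<H>.
        (phi r <#\<^bsub>G\<^esub> H = phi s <#\<^bsub>G\<^esub> H \<longrightarrow> r = s) \<and>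
        (translate Z (vadd r s) \<subseteq> D \<longrightarrow>
           (\<exists>z\<in>Z. (phi r \<otimes>\<^bsub>G\<^esub> phi s) <#\<^bsub>G\<^esub> H = phi (vadd (vadd r s) z) <#\<^bsub>G\<^esub> H)) \<and>
        (translate Z (vadd r (vneg s)) \<subseteq> D \<longrightarrow>
           (\<exists>z\<in>Z. (phi r \<otimes>\<^bsub>G\<^esub> inv\<^bsub>G\<^esub> phi s) <#\<^bsub>G\<^esub> H = phi (vadd (vadd r (vneg s)) z) <#\<^bsub>G\<^esub> H)) \<and>
        (translate Z (vadd (vneg r) s) \<subseteq> D \<longrightarrow>
           (\<exists>z\<in>Z. (inv\<^bsub>G\<^esub> phi r \<otimes>\<^bsub>G\<^esub> phi s) <#\<^bsub>G\<^esub> H = phi (vadd (vadd (vneg r) s) z) <#\<^bsub>G\<^esub> H)) \<and>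
        (translate Z (vneg s) \<subseteq> D \<longrightarrow>
           (\<exists>z\<in>Z. (inv\<^bsub>G\<^esub> phi s) <#\<^bsub>G\<^esub> H = phi (vadd (vneg s) z) <#\<^bsub>G\<^esub> H))"
    using ch by (elim conjE)
  have CHa: "\<exists>z\<in>Z. (phi r \<otimes>\<^bsub>G\<^esub> phi s) <#\<^bsub>G\<^esub> H = phi (vadd (vadd r s) z) <#\<^bsub>G\<^esub> H"
    if "r \<in> D" "s \<in> D" "H \<in> \<H>" "translate Z (vadd r s) \<subseteq> D" for r s H
  proof -
    note q = bspec[OF bspec[OF bspec[OF chall that(1)] that(2)] that(3)]
    show ?thesis by (rule mp[OF conjunct1[OF conjunct2[OF q]] that(4)])
  qed
  have CHb: "\<exists>z\<in>Z. (phi r \<otimes>\<^bsub>G\<^esub> inv\<^bsub>G\<^esub> phi s) <#\<^bsub>G\<^esub> H = phi (vadd (vadd r (vneg s)) z) <#\<^bsub>G\<^esub> H"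
    if "r \<in> D" "s \<in> D" "H \<in> \<H>" "translate Z (vadd r (vneg s)) \<subseteq> D" for r s H
  proof -
    note q = bspec[OF bspec[OF bspec[OF chall that(1)] that(2)] that(3)]
    show ?thesis by (rule mp[OF conjunct1[OF conjunct2[OF conjunct2[OF q]]] that(4)])
  qed
  obtain LZ where LZ: "rect_cr l Z (\<lambda>i. 0) LZ" "\<forall>i<l. 0 < LZ i" using ch4 by blast
  obtain LD where LD: "rect_cr l D (\<lambda>i. 0) LD" using ch5 unfolding centered_rect_def by blast
  have Zeq: "Z = rect l (\<lambda>i. 0) (\<lambda>i. real (LZ i))" using LZ(1) unfolding rect_cr_def by auto
  have Deq: "D = rect l (\<lambda>i. 0) (\<lambda>i. real (LD i))" using LD unfolding rect_cr_def by auto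
  have phiD: "\<And>w. w \<in> D \<Longrightarrow> phi w \<in> carrier G" using phiDs by blast
  have scA: "\<And>t. rscale l t A = rect l c (\<lambda>i. t * real (L i))" by (rule rscale_eq[OF cL])
  have scZ: "\<And>t. rscale l t Z = rect l (\<lambda>i. 0) (\<lambda>i. t * real (LZ i))" by (rule rscale_eq[OF LZ(1)])
  have rgh: "rsub l (rscale l 2 Z) (rscale l eps A)"
     "act_img act phi (rscale l (1 - eps) A) x \<subseteq> R" "R \<subseteq> act_img act phi (rscale l (1 + eps) A) x"
    using assms(10) unfolding roughly_def by auto
  have xX: "x \<in> X" and Hx: "stabilizer G act x \<in> \<H>" using assms(9) unfolding XH_def by auto
  have yX: "y \<in> X" and Hy: "stabilizer G act y \<in> \<H>" using assms(13) unfolding XH_def by auto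

  have KZ: "2 * real (LZ i) \<le> eps * real (L i)" if i: "i < l" for i
  proof -
    obtain cA LA cB LB where r: "rect_cr l (rscale l 2 Z) cA LA" "rect_cr l (rscale l eps A) cB LB"
      "\<forall>i<l. LA i \<le> LB i"
      using rgh(1) unfolding rsub_def by blast
    have 1: "rect l (\<lambda>i. 0) (\<lambda>i. 2 * real (LZ i)) \<subseteq> (rect l cA (\<lambda>i. real (LA i)) :: 'c zvec set)"
    proof -
      have "rscale l 2 Z = rect l cA (\<lambda>i. real (LA i))" using r(1) unfolding rect_cr_def by blast
      then have "rect l (\<lambda>i. 0) (\<lambda>i. 2 * real (LZ i)) = (rect l cA (\<lambda>i. real (LA i)) :: 'c zvec set)"
        by (simp only: scZ)
      then show ?thesis by (rule equalityD1)
    qed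
    have 2: "rect l cB (\<lambda>i. real (LB i)) \<subseteq> (rect l c (\<lambda>i. eps * real (L i)) :: 'c zvec set)"
    proof -
      have "rscale l eps A = rect l cB (\<lambda>i. real (LB i))" using r(2) unfolding rect_cr_def by blast
      then have "rect l c (\<lambda>i. eps * real (L i)) = (rect l cB (\<lambda>i. real (LB i)) :: 'c zvec set)"
        by (simp only: scA)
      then show ?thesis by (rule equalityD2)
    qed
    have "\<bar>real_of_int (0 - cA i)\<bar> + real_of_int \<lfloor>\<bar>2 * real (LZ i)\<bar>\<rfloor> \<le> \<bar>real (LA i)\<bar>"
      by (rule rect_sub_bound[OF 1 i]) simp
    then have a: "2 * real (LZ i) \<le> real (LA i)" by simp
    have "\<bar>real_of_int (cB i - c i)\<bar> + real_of_int \<lfloor>\<bar>real (LB i)\<bar>\<rfloor> \<le> \<bar>eps * real (L i)\<bar>"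
      by (rule rect_sub_bound[OF 2 i]) (use r(2) in \<open>auto simp: rect_cr_def\<close>)
    then have b: "real (LB i) \<le> eps * real (L i)" using assms(5) by simp
    show ?thesis using a b r(3) i by (smt (verit) of_nat_le_iff)
  qed

  have KD: "\<bar>real_of_int (c i)\<bar> + (real M + 2) * real (L i) + 4 * real (LZ i) \<le> real (LD i)"
    if i: "i < l" for i
  proof -
    define s :: int where "s = (if c i \<ge> 0 then 1 else -1)"
    define a where "a = ((c(i := c i + s * int ((M+2) * L i))), (0::'c))"
    define b where "b = (((\<lambda>j. 0)(i := s * int (4 * LZ i))), (0::'c))"
    have "a \<in> rscale l (real M + 2) A" unfolding scA a_def
      by (rule rect_memI) (use i cLz in \<open>auto simp: s_def algebra_simps\<close>)
    moreover have "b \<in> rscale l 4 Z" unfolding scZ b_def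
      by (rule rect_memI) (use i in \<open>auto simp: s_def\<close>)
    ultimately have "vadd a b \<in> D" using assms(12) unfolding msum_def by blast
    then have "\<bar>real_of_int (fst (vadd a b) i - 0)\<bar> \<le> \<bar>real (LD i)\<bar>"
      unfolding Deq rect_mem using i by blast
    then have "\<bar>real_of_int (c i + s * int ((M+2) * L i) + s * int (4 * LZ i))\<bar> \<le> real (LD i)"
      by (simp add: a_def b_def)
    then show ?thesis by (cases "c i \<ge> 0") (auto simp: s_def algebra_simps abs_le_iff)
  qed

  have epsL: "0 \<le> eps * real (L i)" for i using assms(5) by simp
  have Dmem: "w \<in> D" if "\<And>i. i < l \<Longrightarrow> - real (LD i) \<le> real_of_int (fst w i) \<and> real_of_int (fst w i) \<le> real (LD i)"
    "\<And>i. l \<le> i \<Longrightarrow> fst w i = 0" for w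
    unfolding Deq by (rule rect_memI) (use that in auto)
  have ZB: "- real (LZ i) \<le> real_of_int (fst z i) \<and> real_of_int (fst z i) \<le> real (LZ i)"
    if "z \<in> Z" "i < l" for z i
    using rect_memD[of z l "\<lambda>i. 0" "\<lambda>i. real (LZ i)" i] that Zeq by simp
  have ZZ: "fst z i = 0" if "z \<in> Z" "l \<le> i" for z i using that rect_memZ Zeq by blast
  have cabs: "real_of_int (c i) \<le> \<bar>real_of_int (c i)\<bar>" "- real_of_int (c i) \<le> \<bar>real_of_int (c i)\<bar>" for i
    by auto
  have dist: "(1 - 2*eps) * r = r - 2 * (eps * r)" "(1 + 2*eps) * r = r + 2 * (eps * r)"
    "(1 - eps) * r = r - eps * r" "(1 + eps) * r = r + eps * r" "(real M + 2) * r = real M * r + 2 * r"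
    "(2*eps) * r = 2 * (eps * r)" for r :: real
    by (simp_all add: algebra_simps)
  have hML: "0 \<le> real M * real (L i)" for i by simp
  have e1: "eps * real (L i) \<le> real (L i)" for i
  proof -
    have "eps * real (L i) \<le> 1 * real (L i)" by (rule mult_right_mono) (use assms(6) in auto)
    then show ?thesis by simp
  qed
  have Bnd: "0 \<le> eps * real (L i) \<and> eps * real (L i) \<le> real (L i) \<and> 2 * real (LZ i) \<le> eps * real (L i)
     \<and> real_of_int (c i) + real M * real (L i) + 2 * real (L i) + 4 * real (LZ i) \<le> real (LD i)
     \<and> - real_of_int (c i) + real M * real (L i) + 2 * real (L i) + 4 * real (LZ i) \<le> real (LD i)
     \<and> 0 \<le> real M * real (L i) \<and> 0 \<le> real (LZ i) \<and> 0 \<le> real (L i)" if i: "i < l" for i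
    using epsL[of i] e1[of i] KZ[OF i] KD[OF i] cabs[of i] dist(5)[of "real (L i)"] hML[of i] by auto
  have memS: "real_of_int (cc i) - t * real (L i) \<le> real_of_int (fst w i) \<and> real_of_int (fst w i) \<le> real_of_int (cc i) + t * real (L i)"
    if "w \<in> rect l cc (\<lambda>i. t * real (L i))" "i < l" "0 \<le> t" for w cc t i
    using rect_memD[OF that(1,2)] that(3) by simp
  have e12: "0 \<le> 1 - 2 * eps" "0 \<le> 1 - eps" "0 \<le> 1 + eps" "0 \<le> 1 + 2 * eps" "0 \<le> (2::real)"
    "0 \<le> real M" using assms(5,6) by auto
  have mulD: "\<And>a b. a \<in> carrier G \<Longrightarrow> b \<in> carrier G \<Longrightarrow> a \<otimes>\<^bsub>G\<^esub> b \<in> carrier G" by simp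
  have invD: "\<And>a. a \<in> carrier G \<Longrightarrow> inv\<^bsub>G\<^esub> a \<in> carrier G" by simp
  have rsubZ: "rsub l (rscale l 2 Z) (rscale l (2 * eps) B)" if cr: "rect_cr l B cc L" for B cc
  proof -
    have sc': "\<And>t. rscale l t B = rect l cc (\<lambda>i. t * real (L i))" by (rule rscale_eq[OF cr])
    have ccz: "\<forall>i\<ge>l. cc i = 0" using cr unfolding rect_cr_def by auto
    define LB where "LB = (\<lambda>i. nat \<lfloor>\<bar>2 * eps * real (L i)\<bar>\<rfloor>)"
    have r1: "rect_cr l (rscale l 2 Z) (\<lambda>i. 0) (\<lambda>i. 2 * LZ i)"
      unfolding rect_cr_def scZ using LZ(1) unfolding rect_cr_def by auto
    have r2: "rect_cr l (rscale l (2 * eps) B) cc LB"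
      unfolding rect_cr_def sc' LB_def using cLz ccz rect_floor[of l cc "\<lambda>i. 2 * eps * real (L i)"] by auto
    have "2 * LZ i \<le> LB i" if i: "i < l" for i
    proof -
      have "real_of_int (int (2 * LZ i)) \<le> \<bar>2 * eps * real (L i)\<bar>" using Bnd[OF i] by simp
      then have "int (2 * LZ i) \<le> \<lfloor>\<bar>2 * eps * real (L i)\<bar>\<rfloor>" by (simp only: le_floor_iff)
      then have "nat (int (2 * LZ i)) \<le> LB i" unfolding LB_def by (rule nat_mono)
      then show ?thesis by simp
    qed
    then show ?thesis unfolding rsub_def using r1 r2 by blast
  qed

  have P1: "roughly G act X l phi D Z \<H> (2 * eps) (translate A (vneg u)) y R"
    if u: "u \<in> rscale l (real M) A" and yu: "y = act (phi u) x" for u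
  proof -
    have uR: "u \<in> rect l c (\<lambda>i. real M * real (L i))" using u scA by simp
    have uB: "real_of_int (c i) - real M * real (L i) \<le> real_of_int (fst u i) \<and> real_of_int (fst u i) \<le> real_of_int (c i) + real M * real (L i)"
      if "i < l" for i using memS[OF uR that e12(6)] .
    have uZ: "fst u i = 0" if "l \<le> i" for i using rect_memZ[OF uR that] .
    define c' where "c' = (\<lambda>i. c i - fst u i)"
    have "translate A (vneg u) = rect l (\<lambda>i. c i + fst (vneg u) i) (\<lambda>i. real (L i))"
      unfolding Aeq by (rule translate_rect) (simp add: uZ)
    also have "(\<lambda>i. c i + fst (vneg u) i) = c'" by (simp add: c'_def fun_eq_iff)
    finally have A'eq: "translate A (vneg u) = rect l c' (\<lambda>i. real (L i))" .
    have cr': "rect_cr l (translate A (vneg u)) c' L" unfolding rect_cr_def using A'eq cLz uZ c'_def by auto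
    have sc': "\<And>t. rscale l t (translate A (vneg u)) = rect l c' (\<lambda>i. t * real (L i))" by (rule rscale_eq[OF cr'])
    have c'i: "real_of_int (c' i) = real_of_int (c i) - real_of_int (fst u i)" for i by (simp add: c'_def)
    have uD: "u \<in> D"
    proof (rule Dmem)
      fix i assume i: "i < l"
      show "- real (LD i) \<le> real_of_int (fst u i) \<and> real_of_int (fst u i) \<le> real (LD i)"
        using uB[OF i] Bnd[OF i] by linarith
    qed (rule uZ)
    show ?thesis unfolding roughly_def
    proof (intro conjI)
      show "is_rect l (translate A (vneg u))" using cr' unfolding is_rect_def by blast
      show "rscale l 2 (translate A (vneg u)) \<subseteq> D"
      proof
        fix w assume "w \<in> rscale l 2 (translate A (vneg u))"
        then have w: "w \<in> rect l c' (\<lambda>i. 2 * real (L i))" by (simp add: sc')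
        show "w \<in> D"
        proof (rule Dmem)
          fix i assume i: "i < l"
          show "- real (LD i) \<le> real_of_int (fst w i) \<and> real_of_int (fst w i) \<le> real (LD i)"
            using memS[OF w i e12(5)] uB[OF i] Bnd[OF i] c'i[of i] by linarith
        next
          fix i assume "l \<le> i" then show "fst w i = 0" using rect_memZ[OF w] by blast
        qed
      qed
      show "y \<in> XH G act X \<H>" by fact
      show "0 < 2 * eps" "2 * eps < 1" using assms(5,6) by auto
      show "rsub l (rscale l 2 Z) (rscale l (2 * eps) (translate A (vneg u)))" by (rule rsubZ[OF cr'])
      show "act_img act phi (rscale l (1 - 2 * eps) (translate A (vneg u))) y \<subseteq> R"
      proof
        fix p assume "p \<in> act_img act phi (rscale l (1 - 2 * eps) (translate A (vneg u))) y"
        then obtain s where s: "s \<in> rect l c' (\<lambda>i. (1 - 2 * eps) * real (L i))" and p: "p = act (phi s) y"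
          unfolding act_img_def sc' by blast
        have sB: "real_of_int (c' i) - (real (L i) - 2 * (eps * real (L i))) \<le> real_of_int (fst s i) \<and> real_of_int (fst s i) \<le> real_of_int (c' i) + (real (L i) - 2 * (eps * real (L i)))"
          if "i < l" for i using memS[OF s that e12(1)] unfolding dist(1) .
        have sZ: "fst s i = 0" if "l \<le> i" for i using rect_memZ[OF s that] .
        have sD: "s \<in> D"
        proof (rule Dmem)
          fix i assume i: "i < l"
          show "- real (LD i) \<le> real_of_int (fst s i) \<and> real_of_int (fst s i) \<le> real (LD i)"
            using sB[OF i] uB[OF i] Bnd[OF i] c'i[of i] by linarith
        qed (rule sZ)
        have tr: "translate Z (vadd s u) \<subseteq> D"
        proof
          fix q assume "q \<in> translate Z (vadd s u)"
          then obtain z where z: "z \<in> Z" "q = vadd z (vadd s u)" unfolding translate_def by blast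
          show "q \<in> D"
          proof (rule Dmem)
            fix i assume i: "i < l"
            show "- real (LD i) \<le> real_of_int (fst q i) \<and> real_of_int (fst q i) \<le> real (LD i)"
              using sB[OF i] uB[OF i] Bnd[OF i] c'i[of i] ZB[OF z(1) i] unfolding z(2)
              by (simp; linarith)
          next
            fix i assume i: "l \<le> i" show "fst q i = 0" using sZ[OF i] uZ[OF i] ZZ[OF z(1) i] z(2) by simp
          qed
        qed
        obtain z where z: "z \<in> Z" and zc: "(phi s \<otimes>\<^bsub>G\<^esub> phi u) <#\<^bsub>G\<^esub> stabilizer G act x = phi (vadd (vadd s u) z) <#\<^bsub>G\<^esub> stabilizer G act x"
          using CHa[OF sD uD Hx tr] by blast
        define w where "w = vadd (vadd s u) z"
        have wi: "real_of_int (fst w i) = real_of_int (fst s i) + real_of_int (fst u i) + real_of_int (fst z i)" for i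
          by (simp add: w_def)
        have wD: "w \<in> D"
        proof (rule Dmem)
          fix i assume i: "i < l"
          show "- real (LD i) \<le> real_of_int (fst w i) \<and> real_of_int (fst w i) \<le> real (LD i)"
            using sB[OF i] uB[OF i] Bnd[OF i] c'i[of i] ZB[OF z i] wi[of i] by linarith
        next
          fix i assume i: "l \<le> i" show "fst w i = 0" using sZ[OF i] uZ[OF i] ZZ[OF z i] w_def by simp
        qed
        have "p = act (phi s \<otimes>\<^bsub>G\<^esub> phi u) x"
          using p yu ga.composition_rule[OF xX phiD[OF sD] phiD[OF uD]] by simp
        also have "\<dots> = act (phi w) x"
          by (rule coset_act[OF assms(1,3) xX mulD[OF phiD[OF sD] phiD[OF uD]] phiD[OF wD]]) (use zc w_def in simp)
        finally have pw: "p = act (phi w) x" .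
        have "w \<in> rscale l (1 - eps) A" unfolding scA
        proof (rule rect_memI)
          fix i assume i: "i < l"
          show "real_of_int (c i) - (1 - eps) * real (L i) \<le> real_of_int (fst w i) \<and> real_of_int (fst w i) \<le> real_of_int (c i) + (1 - eps) * real (L i)"
            using sB[OF i] Bnd[OF i] c'i[of i] ZB[OF z i] wi[of i] unfolding dist(3) by linarith
        next
          fix i assume i: "l \<le> i" show "fst w i = 0" using sZ[OF i] uZ[OF i] ZZ[OF z i] w_def by simp
        qed
        then show "p \<in> R" using rgh(2) pw unfolding act_img_def by blast
      qed
      show "R \<subseteq> act_img act phi (rscale l (1 + 2 * eps) (translate A (vneg u))) y"
      proof
        fix p assume "p \<in> R"
        then obtain t where t: "t \<in> rect l c (\<lambda>i. (1 + eps) * real (L i))" and p: "p = act (phi t) x"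
          using rgh(3) unfolding act_img_def scA by blast
        have tB: "real_of_int (c i) - (real (L i) + eps * real (L i)) \<le> real_of_int (fst t i) \<and> real_of_int (fst t i) \<le> real_of_int (c i) + (real (L i) + eps * real (L i))"
          if "i < l" for i using memS[OF t that e12(3)] unfolding dist(4) .
        have tZ: "fst t i = 0" if "l \<le> i" for i using rect_memZ[OF t that] .
        have tD: "t \<in> D"
        proof (rule Dmem)
          fix i assume i: "i < l"
          show "- real (LD i) \<le> real_of_int (fst t i) \<and> real_of_int (fst t i) \<le> real (LD i)"
            using tB[OF i] Bnd[OF i] by linarith
        qed (rule tZ)
        have tr: "translate Z (vadd t (vneg u)) \<subseteq> D"
        proof
          fix q assume "q \<in> translate Z (vadd t (vneg u))"
          then obtain z where z: "z \<in> Z" "q = vadd z (vadd t (vneg u))" unfolding translate_def by blast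
          show "q \<in> D"
          proof (rule Dmem)
            fix i assume i: "i < l"
            show "- real (LD i) \<le> real_of_int (fst q i) \<and> real_of_int (fst q i) \<le> real (LD i)"
              using tB[OF i] uB[OF i] Bnd[OF i] ZB[OF z(1) i] unfolding z(2)
              by (simp; linarith)
          next
            fix i assume i: "l \<le> i" show "fst q i = 0" using tZ[OF i] uZ[OF i] ZZ[OF z(1) i] z(2) by simp
          qed
        qed
        obtain z where z: "z \<in> Z" and zc: "(phi t \<otimes>\<^bsub>G\<^esub> inv\<^bsub>G\<^esub> phi u) <#\<^bsub>G\<^esub> stabilizer G act y = phi (vadd (vadd t (vneg u)) z) <#\<^bsub>G\<^esub> stabilizer G act y"
          using CHb[OF tD uD Hy tr] by blast
        define w where "w = vadd (vadd t (vneg u)) z"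
        have wi: "real_of_int (fst w i) = real_of_int (fst t i) - real_of_int (fst u i) + real_of_int (fst z i)" for i
          by (simp add: w_def)
        have wD: "w \<in> D"
        proof (rule Dmem)
          fix i assume i: "i < l"
          show "- real (LD i) \<le> real_of_int (fst w i) \<and> real_of_int (fst w i) \<le> real (LD i)"
            using tB[OF i] uB[OF i] Bnd[OF i] ZB[OF z i] wi[of i] by linarith
        next
          fix i assume i: "l \<le> i" show "fst w i = 0" using tZ[OF i] uZ[OF i] ZZ[OF z i] w_def by simp
        qed
        have xy: "x = act (inv\<^bsub>G\<^esub> phi u) y" using act_inv[OF assms(1,3) xX phiD[OF uD]] yu by simp
        have "p = act (phi t \<otimes>\<^bsub>G\<^esub> inv\<^bsub>G\<^esub> phi u) y"
          using p xy ga.composition_rule[OF yX phiD[OF tD] invD[OF phiD[OF uD]]] by simp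
        also have "\<dots> = act (phi w) y"
          by (rule coset_act[OF assms(1,3) yX mulD[OF phiD[OF tD] invD[OF phiD[OF uD]]] phiD[OF wD]]) (use zc w_def in simp)
        finally have pw: "p = act (phi w) y" .
        have "w \<in> rscale l (1 + 2 * eps) (translate A (vneg u))" unfolding sc'
        proof (rule rect_memI)
          fix i assume i: "i < l"
          show "real_of_int (c' i) - (1 + 2 * eps) * real (L i) \<le> real_of_int (fst w i) \<and> real_of_int (fst w i) \<le> real_of_int (c' i) + (1 + 2 * eps) * real (L i)"
            using tB[OF i] Bnd[OF i] c'i[of i] ZB[OF z i] wi[of i] unfolding dist(2) by linarith
        next
          fix i assume i: "l \<le> i" show "fst w i = 0" using tZ[OF i] uZ[OF i] ZZ[OF z i] w_def by simp
        qed
        then show "p \<in> act_img act phi (rscale l (1 + 2 * eps) (translate A (vneg u))) y"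
          using pw unfolding act_img_def by blast
      qed
    qed
  qed

  have P2: "roughly G act X l phi D Z \<H> (2 * eps) (translate A v) y R"
    if v: "vneg v \<in> rscale l (real M) A" and xv: "x = act (phi v) y" for v
  proof -
    have vR: "vneg v \<in> rect l c (\<lambda>i. real M * real (L i))" using v scA by simp
    have vB: "real_of_int (c i) - real M * real (L i) \<le> - real_of_int (fst v i) \<and> - real_of_int (fst v i) \<le> real_of_int (c i) + real M * real (L i)"
      if "i < l" for i using memS[OF vR that e12(6)] by simp
    have vZ: "fst v i = 0" if "l \<le> i" for i using rect_memZ[OF vR that] by simp
    define c' where "c' = (\<lambda>i. c i + fst v i)"
    have A'eq: "translate A v = rect l c' (\<lambda>i. real (L i))"
      unfolding Aeq c'_def by (rule translate_rect) (simp add: vZ)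
    have cr': "rect_cr l (translate A v) c' L" unfolding rect_cr_def using A'eq cLz vZ c'_def by auto
    have sc': "\<And>t. rscale l t (translate A v) = rect l c' (\<lambda>i. t * real (L i))" by (rule rscale_eq[OF cr'])
    have c'i: "real_of_int (c' i) = real_of_int (c i) + real_of_int (fst v i)" for i by (simp add: c'_def)
    have vD: "v \<in> D"
    proof (rule Dmem)
      fix i assume i: "i < l"
      show "- real (LD i) \<le> real_of_int (fst v i) \<and> real_of_int (fst v i) \<le> real (LD i)"
        using vB[OF i] Bnd[OF i] by linarith
    qed (rule vZ)
    show ?thesis unfolding roughly_def
    proof (intro conjI)
      show "is_rect l (translate A v)" using cr' unfolding is_rect_def by blast
      show "rscale l 2 (translate A v) \<subseteq> D"
      proof
        fix w assume "w \<in> rscale l 2 (translate A v)"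
        then have w: "w \<in> rect l c' (\<lambda>i. 2 * real (L i))" by (simp add: sc')
        show "w \<in> D"
        proof (rule Dmem)
          fix i assume i: "i < l"
          show "- real (LD i) \<le> real_of_int (fst w i) \<and> real_of_int (fst w i) \<le> real (LD i)"
            using memS[OF w i e12(5)] vB[OF i] Bnd[OF i] c'i[of i] by linarith
        next
          fix i assume "l \<le> i" then show "fst w i = 0" using rect_memZ[OF w] by blast
        qed
      qed
      show "y \<in> XH G act X \<H>" by fact
      show "0 < 2 * eps" "2 * eps < 1" using assms(5,6) by auto
      show "rsub l (rscale l 2 Z) (rscale l (2 * eps) (translate A v))" by (rule rsubZ[OF cr'])
      show "act_img act phi (rscale l (1 - 2 * eps) (translate A v)) y \<subseteq> R"
      proof
        fix p assume "p \<in> act_img act phi (rscale l (1 - 2 * eps) (translate A v)) y"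
        then obtain s where s: "s \<in> rect l c' (\<lambda>i. (1 - 2 * eps) * real (L i))" and p: "p = act (phi s) y"
          unfolding act_img_def sc' by blast
        have sB: "real_of_int (c' i) - (real (L i) - 2 * (eps * real (L i))) \<le> real_of_int (fst s i) \<and> real_of_int (fst s i) \<le> real_of_int (c' i) + (real (L i) - 2 * (eps * real (L i)))"
          if "i < l" for i using memS[OF s that e12(1)] unfolding dist(1) .
        have sZ: "fst s i = 0" if "l \<le> i" for i using rect_memZ[OF s that] .
        have sD: "s \<in> D"
        proof (rule Dmem)
          fix i assume i: "i < l"
          show "- real (LD i) \<le> real_of_int (fst s i) \<and> real_of_int (fst s i) \<le> real (LD i)"
            using sB[OF i] vB[OF i] Bnd[OF i] c'i[of i] by linarith
        qed (rule sZ)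
        have tr: "translate Z (vadd s (vneg v)) \<subseteq> D"
        proof
          fix q assume "q \<in> translate Z (vadd s (vneg v))"
          then obtain z where z: "z \<in> Z" "q = vadd z (vadd s (vneg v))" unfolding translate_def by blast
          show "q \<in> D"
          proof (rule Dmem)
            fix i assume i: "i < l"
            show "- real (LD i) \<le> real_of_int (fst q i) \<and> real_of_int (fst q i) \<le> real (LD i)"
              using sB[OF i] vB[OF i] Bnd[OF i] c'i[of i] ZB[OF z(1) i] unfolding z(2)
              by (simp; linarith)
          next
            fix i assume i: "l \<le> i" show "fst q i = 0" using sZ[OF i] vZ[OF i] ZZ[OF z(1) i] z(2) by simp
          qed
        qed
        obtain z where z: "z \<in> Z" and zc: "(phi s \<otimes>\<^bsub>G\<^esub> inv\<^bsub>G\<^esub> phi v) <#\<^bsub>G\<^esub> stabilizer G act x = phi (vadd (vadd s (vneg v)) z) <#\<^bsub>G\<^esub> stabilizer G act x"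
          using CHb[OF sD vD Hx tr] by blast
        define w where "w = vadd (vadd s (vneg v)) z"
        have wi: "real_of_int (fst w i) = real_of_int (fst s i) - real_of_int (fst v i) + real_of_int (fst z i)" for i
          by (simp add: w_def)
        have wD: "w \<in> D"
        proof (rule Dmem)
          fix i assume i: "i < l"
          show "- real (LD i) \<le> real_of_int (fst w i) \<and> real_of_int (fst w i) \<le> real (LD i)"
            using sB[OF i] vB[OF i] Bnd[OF i] c'i[of i] ZB[OF z i] wi[of i] by linarith
        next
          fix i assume i: "l \<le> i" show "fst w i = 0" using sZ[OF i] vZ[OF i] ZZ[OF z i] w_def by simp
        qed
        have yx: "y = act (inv\<^bsub>G\<^esub> phi v) x" using act_inv[OF assms(1,3) yX phiD[OF vD]] xv by simp
        have "p = act (phi s \<otimes>\<^bsub>G\<^esub> inv\<^bsub>G\<^esub> phi v) x"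
          using p yx ga.composition_rule[OF xX phiD[OF sD] invD[OF phiD[OF vD]]] by simp
        also have "\<dots> = act (phi w) x"
          by (rule coset_act[OF assms(1,3) xX mulD[OF phiD[OF sD] invD[OF phiD[OF vD]]] phiD[OF wD]]) (use zc w_def in simp)
        finally have pw: "p = act (phi w) x" .
        have "w \<in> rscale l (1 - eps) A" unfolding scA
        proof (rule rect_memI)
          fix i assume i: "i < l"
          show "real_of_int (c i) - (1 - eps) * real (L i) \<le> real_of_int (fst w i) \<and> real_of_int (fst w i) \<le> real_of_int (c i) + (1 - eps) * real (L i)"
            using sB[OF i] Bnd[OF i] c'i[of i] ZB[OF z i] wi[of i] unfolding dist(3) by linarith
        next
          fix i assume i: "l \<le> i" show "fst w i = 0" using sZ[OF i] vZ[OF i] ZZ[OF z i] w_def by simp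
        qed
        then show "p \<in> R" using rgh(2) pw unfolding act_img_def by blast
      qed
      show "R \<subseteq> act_img act phi (rscale l (1 + 2 * eps) (translate A v)) y"
      proof
        fix p assume "p \<in> R"
        then obtain t where t: "t \<in> rect l c (\<lambda>i. (1 + eps) * real (L i))" and p: "p = act (phi t) x"
          using rgh(3) unfolding act_img_def scA by blast
        have tB: "real_of_int (c i) - (real (L i) + eps * real (L i)) \<le> real_of_int (fst t i) \<and> real_of_int (fst t i) \<le> real_of_int (c i) + (real (L i) + eps * real (L i))"
          if "i < l" for i using memS[OF t that e12(3)] unfolding dist(4) .
        have tZ: "fst t i = 0" if "l \<le> i" for i using rect_memZ[OF t that] .
        have tD: "t \<in> D"
        proof (rule Dmem)
          fix i assume i: "i < l"
          show "- real (LD i) \<le> real_of_int (fst t i) \<and> real_of_int (fst t i) \<le> real (LD i)"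
            using tB[OF i] Bnd[OF i] by linarith
        qed (rule tZ)
        have tr: "translate Z (vadd t v) \<subseteq> D"
        proof
          fix q assume "q \<in> translate Z (vadd t v)"
          then obtain z where z: "z \<in> Z" "q = vadd z (vadd t v)" unfolding translate_def by blast
          show "q \<in> D"
          proof (rule Dmem)
            fix i assume i: "i < l"
            show "- real (LD i) \<le> real_of_int (fst q i) \<and> real_of_int (fst q i) \<le> real (LD i)"
              using tB[OF i] vB[OF i] Bnd[OF i] ZB[OF z(1) i] unfolding z(2)
              by (simp; linarith)
          next
            fix i assume i: "l \<le> i" show "fst q i = 0" using tZ[OF i] vZ[OF i] ZZ[OF z(1) i] z(2) by simp
          qed
        qed
        obtain z where z: "z \<in> Z" and zc: "(phi t \<otimes>\<^bsub>G\<^esub> phi v) <#\<^bsub>G\<^esub> stabilizer G act y = phi (vadd (vadd t v) z) <#\<^bsub>G\<^esub> stabilizer G act y"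
          using CHa[OF tD vD Hy tr] by blast
        define w where "w = vadd (vadd t v) z"
        have wi: "real_of_int (fst w i) = real_of_int (fst t i) + real_of_int (fst v i) + real_of_int (fst z i)" for i
          by (simp add: w_def)
        have wD: "w \<in> D"
        proof (rule Dmem)
          fix i assume i: "i < l"
          show "- real (LD i) \<le> real_of_int (fst w i) \<and> real_of_int (fst w i) \<le> real (LD i)"
            using tB[OF i] vB[OF i] Bnd[OF i] ZB[OF z i] wi[of i] by linarith
        next
          fix i assume i: "l \<le> i" show "fst w i = 0" using tZ[OF i] vZ[OF i] ZZ[OF z i] w_def by simp
        qed
        have "p = act (phi t \<otimes>\<^bsub>G\<^esub> phi v) y"
          using p xv ga.composition_rule[OF yX phiD[OF tD] phiD[OF vD]] by simp
        also have "\<dots> = act (phi w) y"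
          by (rule coset_act[OF assms(1,3) yX mulD[OF phiD[OF tD] phiD[OF vD]] phiD[OF wD]]) (use zc w_def in simp)
        finally have pw: "p = act (phi w) y" .
        have "w \<in> rscale l (1 + 2 * eps) (translate A v)" unfolding sc'
        proof (rule rect_memI)
          fix i assume i: "i < l"
          show "real_of_int (c' i) - (1 + 2 * eps) * real (L i) \<le> real_of_int (fst w i) \<and> real_of_int (fst w i) \<le> real_of_int (c' i) + (1 + 2 * eps) * real (L i)"
            using tB[OF i] Bnd[OF i] c'i[of i] ZB[OF z i] wi[of i] unfolding dist(2) by linarith
        next
          fix i assume i: "l \<le> i" show "fst w i = 0" using tZ[OF i] vZ[OF i] ZZ[OF z i] w_def by simp
        qed
        then show "p \<in> act_img act phi (rscale l (1 + 2 * eps) (translate A v)) y"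
          using pw unfolding act_img_def by blast
      qed
    qed
  qed
  show ?thesis using P1 P2 by blast
qed

end
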